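(* In the setting of the context, there is a constant $c(\beta)$ such that the following holds: for all configurations $\sigma,\sigma'\in\Omega$ (depending on $n$) with $\bm S(\sigma)=\bm S(\sigma')$, there is a coupling $(\sigma_t,\sigma'_t)_{t\ge0}$ of two Glauber dynamics started at $\sigma$ and $\sigma'$ such that, with $\tau:=\min\{t\ge0:\sigma_t=\sigma'_t\}$, \[ \limsup_{n\to\infty}\mathbb P_{\sigma,\sigma'}\big(\tau>c(\beta)\,n\log n\big)=0. \]
   Context: Fix $m\ge1$, proportions $p_1,\dots,p_m>0$ with $\sum_ip_i=1$, a symmetric matrix $\mathbf K=(k_{ij})$ with all $k_{ij}>0$, and any inverse temperature $\beta\ge0$; $n$ ranges over positive integers with $np_i\in\mathbb N$. The vertex set $V=\{1,\dots,n\}$ is partitioned into blocks $G_1,\dots,G_m$ with $|G_i|=np_i$; for $v\in G_i,w\in G_j$ put $K(v,w)=k_{ij}/n$. The Glauber dynamics on $\Omega=\{-1,+1\}^V$ picks at each step a uniform random vertex $v$ and sets its spin to $\pm1$ with probability $\frac{1\pm\tanh(\beta S^v)}2$, $S^v=\sum_{w\ne v}K(v,w)\sigma(w)$. For $\sigma\in\Omega$, $\bm S(\sigma)=(S^{(1)}(\sigma),\dots,S^{(m)}(\sigma))$ with $S^{(i)}(\sigma)=\frac1n\sum_{v\in G_i}\sigma(v)$. *)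

theory Defs
  imports "HOL-Probability.Probability"
begin

text \<open>Vertices are 0,...,n-1. A configuration is a function nat => int which takes
values +1/-1 on the vertices and 0 elsewhere.\<close>

type_synonym config = "nat \<Rightarrow> int"

definition config_space :: "nat \<Rightarrow> config set" where
  "config_space n = {\<sigma>. (\<forall>v<n. \<sigma> v = 1 \<or> \<sigma> v = -1) \<and> (\<forall>v\<ge>n. \<sigma> v = 0)}"

definition admissible :: "nat \<Rightarrow> (nat \<Rightarrow> real) \<Rightarrow> nat \<Rightarrow> bool" where
  "admissible m p n \<longleftrightarrow> n > 0 \<and> (\<forall>i<m. real n * p i \<in> \<nat>)"

text \<open>A block assignment G (vertex v lies in block G v, blocks 0,...,m-1) with |G_i| = n p_i.\<close>
definition block_partition :: "nat \<Rightarrow> (nat \<Rightarrow> real) \<Rightarrow> nat \<Rightarrow> (nat \<Rightarrow> nat) \<Rightarrow> bool" where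
  "block_partition m p n G \<longleftrightarrow>
     (\<forall>v<n. G v < m) \<and> (\<forall>i<m. real (card {v. v < n \<and> G v = i}) = real n * p i)"

definition interaction :: "(nat \<Rightarrow> nat \<Rightarrow> real) \<Rightarrow> nat \<Rightarrow> (nat \<Rightarrow> nat) \<Rightarrow> nat \<Rightarrow> nat \<Rightarrow> real" where
  "interaction k n G v w = k (G v) (G w) / real n"

definition local_field :: "(nat \<Rightarrow> nat \<Rightarrow> real) \<Rightarrow> nat \<Rightarrow> (nat \<Rightarrow> nat) \<Rightarrow> config \<Rightarrow> nat \<Rightarrow> real" where
  "local_field k n G \<sigma> v = (\<Sum>w\<in>{0..<n} - {v}. interaction k n G v w * real_of_int (\<sigma> w))"

definition glauber_step ::
  "real \<Rightarrow> (nat \<Rightarrow> nat \<Rightarrow> real) \<Rightarrow> nat \<Rightarrow> (nat \<Rightarrow> nat) \<Rightarrow> config \<Rightarrow> config pmf" where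
  "glauber_step \<beta> k n G \<sigma> =
     bind_pmf (pmf_of_set {0..<n}) (\<lambda>v.
       map_pmf (\<lambda>b. \<sigma>(v := (if b then 1 else -1)))
         (bernoulli_pmf ((1 + tanh (\<beta> * local_field k n G \<sigma> v)) / 2)))"

definition block_magnetization :: "nat \<Rightarrow> (nat \<Rightarrow> nat) \<Rightarrow> config \<Rightarrow> nat \<Rightarrow> real" where
  "block_magnetization n G \<sigma> i = (\<Sum>v\<in>{v. v < n \<and> G v = i}. real_of_int (\<sigma> v)) / real n"

text \<open>Law of the trajectory (X_0,...,X_T) of the Markov chain with kernel P started at x,
as a distribution on lists of length T+1.\<close>
primrec path_law :: "('a \<Rightarrow> 'a pmf) \<Rightarrow> 'a \<Rightarrow> nat \<Rightarrow> 'a list pmf" where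
  "path_law P x 0 = return_pmf [x]"
| "path_law P x (Suc t) =
     bind_pmf (path_law P x t) (\<lambda>xs. map_pmf (\<lambda>y. xs @ [y]) (P (last xs)))"

text \<open>Integer time horizon floor(c n log n); for c > 0, tau > c n log n iff tau > horizon.\<close>
definition horizon :: "real \<Rightarrow> nat \<Rightarrow> nat" where
  "horizon c n = nat \<lfloor>c * real n * ln (real n)\<rfloor>"

text \<open>Event tau > T: the two trajectories differ at every time 0..T.\<close>
definition not_coalesced :: "nat \<Rightarrow> ('a list \<times> 'a list) set" where
  "not_coalesced T = {(xs, ys). \<forall>t\<le>T. xs ! t \<noteq> ys ! t}"

end

theory Submission
  imports Defs
begin


lemma path_law_len: "xs \<in> set_pmf (path_law P x t) \<Longrightarrow> length xs = Suc t"
  by (induction t arbitrary: xs) auto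

lemma path_law_marg:
  assumes "\<And>z. map_pmf f (Q z) = P (f z)"
  shows "map_pmf (map f) (path_law Q z t) = path_law P (f z) t"
proof (induction t)
  case 0 then show ?case by simp
next
  case (Suc t)
  have "map_pmf (map f) (path_law Q z (Suc t)) =
     bind_pmf (path_law Q z t) (\<lambda>zs. map_pmf (\<lambda>a. map f zs @ [a]) (map_pmf f (Q (last zs))))"
    by (simp add: map_bind_pmf pmf.map_comp o_def)
  also have "\<dots> = bind_pmf (path_law Q z t) (\<lambda>zs. map_pmf (\<lambda>a. map f zs @ [a]) (P (last (map f zs))))"
  proof (rule bind_pmf_cong[OF refl])
    fix zs assume "zs \<in> set_pmf (path_law Q z t)"
    then have "zs \<noteq> []" using path_law_len by fastforce
    then show "map_pmf (\<lambda>a. map f zs @ [a]) (map_pmf f (Q (last zs))) = map_pmf (\<lambda>a. map f zs @ [a]) (P (last (map f zs)))"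
      by (simp add: assms last_map)
  qed
  also have "\<dots> = bind_pmf (map_pmf (map f) (path_law Q z t)) (\<lambda>xs. map_pmf (\<lambda>a. xs @ [a]) (P (last xs)))"
    by (simp add: bind_map_pmf)
  also have "\<dots> = path_law P (f z) (Suc t)" using Suc by simp
  finally show ?case .
qed

lemma path_law_last: "map_pmf last (path_law Q z (Suc t)) = bind_pmf (map_pmf last (path_law Q z t)) Q"
  by (simp add: map_bind_pmf pmf.map_comp o_def bind_map_pmf map_pmf_def[symmetric])

lemma path_law_last_supp:
  assumes "\<And>z. z \<in> S \<Longrightarrow> set_pmf (Q z) \<subseteq> S" "z0 \<in> S"
  shows "set_pmf (map_pmf last (path_law Q z0 t)) \<subseteq> S"
proof (induction t)
  case 0 then show ?case using assms by simp
next
  case (Suc t) then show ?case using assms(1) unfolding path_law_last by fastforce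
qed

lemma path_law_contract:
  fixes D :: "'a \<Rightarrow> ennreal"
  assumes "\<And>z. z \<in> S \<Longrightarrow> set_pmf (Q z) \<subseteq> S" "z0 \<in> S"
    and "\<And>z. z \<in> S \<Longrightarrow> (\<integral>\<^sup>+y. D y \<partial>Q z) \<le> r * D z"
  shows "(\<integral>\<^sup>+y. D y \<partial>map_pmf last (path_law Q z0 t)) \<le> r ^ t * D z0"
proof (induction t)
  case 0 then show ?case by simp
next
  case (Suc t)
  have "(\<integral>\<^sup>+y. D y \<partial>map_pmf last (path_law Q z0 (Suc t)))
     = (\<integral>\<^sup>+z. (\<integral>\<^sup>+y. D y \<partial>Q z) \<partial>map_pmf last (path_law Q z0 t))"
    unfolding path_law_last by simp
  also have "\<dots> \<le> (\<integral>\<^sup>+z. r * D z \<partial>map_pmf last (path_law Q z0 t))"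
    apply (rule nn_integral_mono_AE)
    using path_law_last_supp[of S Q z0 t] assms
    by (auto simp: AE_measure_pmf_iff simp del: set_map_pmf)
  also have "\<dots> = r * (\<integral>\<^sup>+z. D z \<partial>map_pmf last (path_law Q z0 t))"
    by (simp add: nn_integral_cmult)
  also have "\<dots> \<le> r * (r ^ t * D z0)" using Suc by (simp add: mult_left_mono)
  finally show ?case by (simp add: mult.assoc)
qed



definition good :: "nat \<Rightarrow> (nat \<Rightarrow> nat) \<Rightarrow> config \<times> config \<Rightarrow> bool" where
  "good n G z \<longleftrightarrow> 0 < n \<and> fst z \<in> config_space n \<and> snd z \<in> config_space n \<and>
     (\<forall>i. (\<Sum>u\<in>{u. u < n \<and> G u = i}. fst z u) = (\<Sum>u\<in>{u. u < n \<and> G u = i}. snd z u))"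

definition pi_ok :: "nat \<Rightarrow> (nat \<Rightarrow> nat) \<Rightarrow> config \<Rightarrow> config \<Rightarrow> (nat \<Rightarrow> nat) \<Rightarrow> bool" where
  "pi_ok n G x y \<pi> \<longleftrightarrow> inj_on \<pi> {0..<n} \<and>
     (\<forall>v<n. \<pi> v < n \<and> G (\<pi> v) = G v \<and> y (\<pi> v) = x v \<and> (x v = y v \<longrightarrow> \<pi> v = v) \<and>
        (x v \<noteq> y v \<longrightarrow> x (\<pi> v) = y v))"

lemma full_sum_group:
  "(\<Sum>u\<in>{0..<n}. k (G v) (G u) / real n * real_of_int (x u)) =
   (\<Sum>i\<in>G ` {0..<n}. k (G v) i / real n * real_of_int (\<Sum>u\<in>{u. u < n \<and> G u = i}. x u))"
proof -
  have "(\<Sum>u\<in>{0..<n}. k (G v) (G u) / real n * real_of_int (x u)) =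
     (\<Sum>i\<in>G ` {0..<n}. \<Sum>u\<in>{u \<in> {0..<n}. G u = i}. k (G v) (G u) / real n * real_of_int (x u))"
    by (rule sum.group[symmetric]) auto
  also have "\<dots> = (\<Sum>i\<in>G ` {0..<n}. k (G v) i / real n * real_of_int (\<Sum>u\<in>{u. u < n \<and> G u = i}. x u))"
    by (intro sum.cong refl) (auto simp: sum_distrib_left intro!: sum.cong)
  finally show ?thesis .
qed

lemma local_field_alt:
  assumes "v < n"
  shows "local_field k n G x v = (\<Sum>u\<in>{0..<n}. k (G v) (G u) / real n * real_of_int (x u))
           - k (G v) (G v) / real n * real_of_int (x v)"
  using assms unfolding local_field_def interaction_def by (simp add: sum_diff1)

lemma local_field_eq:
  assumes "\<forall>i. (\<Sum>u\<in>{u. u < n \<and> G u = i}. x u) = (\<Sum>u\<in>{u. u < n \<and> G u = i}. y u)"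
    and "v < n" "w < n" "G w = G v" "y w = x v"
  shows "local_field k n G x v = local_field k n G y w"
  unfolding local_field_alt[OF assms(2)] local_field_alt[OF assms(3)] full_sum_group
  using assms by simp

lemma cs_pm: "x \<in> config_space n \<Longrightarrow> v < n \<Longrightarrow> x v = 1 \<or> x v = -1"
  by (auto simp: config_space_def)

lemma card_balance:
  fixes x y :: config
  assumes "x \<in> config_space n" "y \<in> config_space n"
    and "(\<Sum>u\<in>{u. u < n \<and> G u = i}. x u) = (\<Sum>u\<in>{u. u < n \<and> G u = i}. y u)"
  shows "card {u. u < n \<and> G u = i \<and> x u = 1 \<and> y u = -1} = card {u. u < n \<and> G u = i \<and> x u = -1 \<and> y u = 1}"
proof -
  let ?B = "{u. u < n \<and> G u = i}"
  have fin: "finite ?B" by simp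
  have "0 = (\<Sum>u\<in>?B. x u - y u)" using assms(3) by (simp add: sum_subtractf)
  also have "\<dots> = (\<Sum>u\<in>?B. (if x u = 1 \<and> y u = -1 then 2 else 0) - (if x u = -1 \<and> y u = 1 then 2 else 0))"
    apply (intro sum.cong refl)
    using cs_pm[OF assms(1)] cs_pm[OF assms(2)] by fastforce
  also have "\<dots> = (\<Sum>u\<in>?B. (if x u = 1 \<and> y u = -1 then 2 else 0)) - (\<Sum>u\<in>?B. (if x u = -1 \<and> y u = 1 then 2 else 0))"
    by (simp add: sum_subtractf)
  also have "\<dots> = 2 * int (card {u\<in>?B. x u = 1 \<and> y u = -1}) - 2 * int (card {u\<in>?B. x u = -1 \<and> y u = 1})"
    by (simp add: sum.inter_filter[OF fin, symmetric])
  finally have "card {u\<in>?B. x u = 1 \<and> y u = -1} = card {u\<in>?B. x u = -1 \<and> y u = 1}" by simp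
  moreover have "{u\<in>?B. x u = 1 \<and> y u = -1} = {u. u < n \<and> G u = i \<and> x u = 1 \<and> y u = -1}" by auto
  moreover have "{u\<in>?B. x u = -1 \<and> y u = 1} = {u. u < n \<and> G u = i \<and> x u = -1 \<and> y u = 1}" by auto
  ultimately show ?thesis by simp
qed

lemma pi_exists:
  assumes "good n G (x, y)"
  shows "\<exists>\<pi>. pi_ok n G x y \<pi>"
proof -
  define Ap where "Ap i = {u. u < n \<and> G u = i \<and> x u = 1 \<and> y u = -1}" for i
  define Am where "Am i = {u. u < n \<and> G u = i \<and> x u = -1 \<and> y u = 1}" for i
  have xc: "x \<in> config_space n" and yc: "y \<in> config_space n" using assms by (auto simp: good_def)
  have cards: "card (Ap i) = card (Am i)" for i
    unfolding Ap_def Am_def by (rule card_balance[OF xc yc]) (use assms in \<open>auto simp: good_def\<close>)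
  have "\<forall>i. \<exists>h. bij_betw h (Ap i) (Am i)"
    using cards by (intro allI finite_same_card_bij) (auto simp: Ap_def Am_def)
  then obtain h where h: "\<And>i. bij_betw (h i) (Ap i) (Am i)" by metis
  have "\<forall>i. \<exists>g. bij_betw g (Am i) (Ap i)"
    using cards by (intro allI finite_same_card_bij) (auto simp: Ap_def Am_def)
  then obtain g where g: "\<And>i. bij_betw (g i) (Am i) (Ap i)" by metis
  define \<pi> where "\<pi> v = (if v \<in> Ap (G v) then h (G v) v else if v \<in> Am (G v) then g (G v) v else v)" for v
  have hA: "v \<in> Ap i \<Longrightarrow> h i v \<in> Am i" for v i using h by (auto simp: bij_betw_def)
  have gA: "v \<in> Am i \<Longrightarrow> g i v \<in> Ap i" for v i using g by (auto simp: bij_betw_def)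
  have hi: "inj_on (h i) (Ap i)" for i using h by (auto simp: bij_betw_def)
  have gi: "inj_on (g i) (Am i)" for i using g by (auto simp: bij_betw_def)
  have pm: "v < n \<Longrightarrow> (x v = 1 \<or> x v = -1) \<and> (y v = 1 \<or> y v = -1)" for v
    using cs_pm[OF xc] cs_pm[OF yc] by blast
  have props: "\<pi> v < n \<and> G (\<pi> v) = G v \<and> y (\<pi> v) = x v \<and> (x v = y v \<longrightarrow> \<pi> v = v) \<and>
        (x v \<noteq> y v \<longrightarrow> x (\<pi> v) = y v)" if "v < n" for v
  proof (cases "v \<in> Ap (G v)")
    case True
    then show ?thesis using hA[OF True] by (auto simp: \<pi>_def Ap_def Am_def)
  next
    case False
    show ?thesis
    proof (cases "v \<in> Am (G v)")
      case True
      then show ?thesis using gA[OF True] False by (auto simp: \<pi>_def Ap_def Am_def)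
    next
      case False2: False
      then show ?thesis using False pm[OF that] that by (auto simp: \<pi>_def Ap_def Am_def)
    qed
  qed
  have "inj_on \<pi> {0..<n}"
  proof (rule inj_onI)
    fix u v assume u: "u \<in> {0..<n}" and v: "v \<in> {0..<n}" and e: "\<pi> u = \<pi> v"
    have Gs: "G u = G v" using props[of u] props[of v] u v e by auto
    show "u = v"
    proof (cases "u \<in> Ap (G u)")
      case uA: True
      then have pu: "\<pi> u \<in> Am (G u)" using hA by (simp add: \<pi>_def)
      show ?thesis
      proof (cases "v \<in> Ap (G v)")
        case True
        then show ?thesis using uA Gs e hi[of "G u"] by (auto simp: \<pi>_def inj_on_def)
      next
        case False
        then have "v \<in> Am (G v) \<or> \<pi> v = v" by (auto simp: \<pi>_def)
        then show ?thesis
        proof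
          assume "v \<in> Am (G v)"
          then have "\<pi> v \<in> Ap (G v)" using gA False by (simp add: \<pi>_def)
          then show ?thesis using pu e by (auto simp: Ap_def Am_def)
        next
          assume "\<pi> v = v"
          then have "v \<in> Am (G v)" using pu e Gs by simp
          moreover have "\<pi> v \<in> Ap (G v)" using gA False \<open>v \<in> Am (G v)\<close> by (simp add: \<pi>_def)
          ultimately show ?thesis using \<open>\<pi> v = v\<close> by (auto simp: Ap_def Am_def)
        qed
      qed
    next
      case uN: False
      show ?thesis
      proof (cases "u \<in> Am (G u)")
        case uM: True
        then have pu: "\<pi> u \<in> Ap (G u)" using gA uN by (simp add: \<pi>_def)
        show ?thesis
        proof (cases "v \<in> Ap (G v)")
          case True
          then have "\<pi> v \<in> Am (G v)" using hA by (simp add: \<pi>_def)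
          then show ?thesis using pu e by (auto simp: Ap_def Am_def)
        next
          case vN: False
          show ?thesis
          proof (cases "v \<in> Am (G v)")
            case True
            then show ?thesis using uM uN vN Gs e gi[of "G u"] by (auto simp: \<pi>_def inj_on_def)
          next
            case False
            then have "\<pi> v = v" using vN by (simp add: \<pi>_def)
            then show ?thesis using pu e Gs vN by simp
          qed
        qed
      next
        case uM: False
        then have pu: "\<pi> u = u" using uN by (simp add: \<pi>_def)
        show ?thesis
        proof (cases "v \<in> Ap (G v)")
          case True
          then have "\<pi> v \<in> Am (G v)" using hA by (simp add: \<pi>_def)
          then show ?thesis using pu e Gs uM by simp
        next
          case vN: False
          show ?thesis
          proof (cases "v \<in> Am (G v)")
            case True
            then have "\<pi> v \<in> Ap (G v)" using gA vN by (simp add: \<pi>_def)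
            then show ?thesis using pu e Gs uN by simp
          next
            case False
            then show ?thesis using vN pu e by (simp add: \<pi>_def)
          qed
        qed
      qed
    qed
  qed
  then show ?thesis using props unfolding pi_ok_def by blast
qed



definition cstep :: "real \<Rightarrow> (nat \<Rightarrow> nat \<Rightarrow> real) \<Rightarrow> nat \<Rightarrow> (nat \<Rightarrow> nat) \<Rightarrow> config \<times> config \<Rightarrow> (config \<times> config) pmf" where
  "cstep \<beta> k n G z = (if good n G z then
     bind_pmf (pmf_of_set {0..<n}) (\<lambda>v.
       map_pmf (\<lambda>b. ((fst z)(v := (if b then 1 else -1)), (snd z)((SOME \<pi>. pi_ok n G (fst z) (snd z) \<pi>) v := (if b then 1 else -1))))
         (bernoulli_pmf ((1 + tanh (\<beta> * local_field k n G (fst z) v)) / 2)))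
     else pair_pmf (glauber_step \<beta> k n G (fst z)) (glauber_step \<beta> k n G (snd z)))"

lemma pi_some:
  assumes "good n G (x, y)"
  shows "pi_ok n G x y (SOME \<pi>. pi_ok n G x y \<pi>)"
  using pi_exists[OF assms] by (rule someI_ex)

lemma cstep_fst: "map_pmf fst (cstep \<beta> k n G z) = glauber_step \<beta> k n G (fst z)"
  by (auto simp: cstep_def map_fst_pair_pmf map_bind_pmf pmf.map_comp o_def glauber_step_def)

lemma cstep_snd: "map_pmf snd (cstep \<beta> k n G z) = glauber_step \<beta> k n G (snd z)"
proof (cases "good n G z")
  case False then show ?thesis by (simp add: cstep_def map_snd_pair_pmf)
next
  case True
  obtain x y where z: "z = (x, y)" by (cases z)
  define \<pi> where "\<pi> = (SOME \<pi>. pi_ok n G x y \<pi>)"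
  have pi: "pi_ok n G x y \<pi>" using pi_some True unfolding z \<pi>_def by blast
  have n0: "0 < n" and bs: "\<forall>i. (\<Sum>u\<in>{u. u < n \<and> G u = i}. x u) = (\<Sum>u\<in>{u. u < n \<and> G u = i}. y u)"
    using True by (auto simp: good_def z)
  define F where "F = (\<lambda>w. map_pmf (\<lambda>b. y(w := (if b then 1 else -1)))
         (bernoulli_pmf ((1 + tanh (\<beta> * local_field k n G y w)) / 2)))"
  have img: "\<pi> ` {0..<n} = {0..<n}"
    using pi by (intro endo_inj_surj) (auto simp: pi_ok_def)
  have "map_pmf snd (cstep \<beta> k n G z) = bind_pmf (pmf_of_set {0..<n}) (\<lambda>v. F (\<pi> v))"
    unfolding F_def using True
    apply (simp add: cstep_def map_bind_pmf pmf.map_comp o_def z \<pi>_def[symmetric])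
    apply (rule bind_pmf_cong[OF refl])
    subgoal for v
      using n0 pi local_field_eq[OF bs, of v "\<pi> v" k] by (auto simp: pi_ok_def)
    done
  also have "\<dots> = bind_pmf (map_pmf \<pi> (pmf_of_set {0..<n})) F"
    by (simp add: bind_map_pmf)
  also have "\<dots> = bind_pmf (pmf_of_set {0..<n}) F"
    using pi n0 by (subst map_pmf_of_set_inj) (auto simp: pi_ok_def img)
  finally show ?thesis by (simp add: z glauber_step_def F_def)
qed

lemma sum_upd_int:
  fixes f :: "nat \<Rightarrow> int"
  assumes "finite S"
  shows "(\<Sum>u\<in>S. (f(a := c)) u) = (\<Sum>u\<in>S. f u) + (if a \<in> S then c - f a else 0)"
proof (cases "a \<in> S")
  case True
  have e: "(\<Sum>u\<in>S - {a}. (f(a := c)) u) = (\<Sum>u\<in>S - {a}. f u)" by (rule sum.cong) auto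
  have "(\<Sum>u\<in>S. (f(a := c)) u) = (f(a:=c)) a + (\<Sum>u\<in>S - {a}. (f(a := c)) u)"
    by (rule sum.remove[OF assms True])
  then have "(\<Sum>u\<in>S. (f(a := c)) u) = c + (\<Sum>u\<in>S - {a}. f u)" using e by simp
  moreover have "(\<Sum>u\<in>S. f u) = f a + (\<Sum>u\<in>S - {a}. f u)"
    using assms True by (simp add: sum.remove[of S a])
  ultimately show ?thesis using True by simp
next
  case False
  then show ?thesis by (auto intro!: sum.cong)
qed

lemma cstep_good:
  assumes "good n G z"
  shows "set_pmf (cstep \<beta> k n G z) \<subseteq> {z. good n G z}"
proof
  obtain x y where z: "z = (x, y)" by (cases z)
  define \<pi> where "\<pi> = (SOME \<pi>. pi_ok n G x y \<pi>)"
  have pi: "pi_ok n G x y \<pi>" using pi_some assms unfolding z \<pi>_def by blast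
  have n0: "0 < n" and bs: "\<And>i. (\<Sum>u\<in>{u. u < n \<and> G u = i}. x u) = (\<Sum>u\<in>{u. u < n \<and> G u = i}. y u)"
    and xc: "x \<in> config_space n" and yc: "y \<in> config_space n"
    using assms by (auto simp: good_def z)
  fix z' assume "z' \<in> set_pmf (cstep \<beta> k n G z)"
  then obtain v b where v: "v < n" and z': "z' = (x(v := (if b then 1 else -1)), y(\<pi> v := (if b then 1 else -1)))"
    using assms n0 by (auto simp: cstep_def z \<pi>_def[symmetric])
  define s :: int where "s = (if b then 1 else -1)"
  have s: "s = 1 \<or> s = -1" by (simp add: s_def)
  have z': "z' = (x(v := s), y(\<pi> v := s))" using z' by (simp add: s_def)
  have pv: "\<pi> v < n" "G (\<pi> v) = G v" "y (\<pi> v) = x v" using pi v by (auto simp: pi_ok_def)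
  have "(\<Sum>u\<in>{u. u < n \<and> G u = i}. (x(v := s)) u) = (\<Sum>u\<in>{u. u < n \<and> G u = i}. (y(\<pi> v := s)) u)" for i
  proof -
    have fin: "finite {u. u < n \<and> G u = i}" by simp
    show ?thesis unfolding sum_upd_int[OF fin] using pv v bs[of i] by simp
  qed
  moreover have "x(v := s) \<in> config_space n" "y(\<pi> v := s) \<in> config_space n"
    using xc yc s v pv by (auto simp: config_space_def)
  ultimately show "z' \<in> {z. good n G z}" using n0 by (simp add: good_def z')
qed



definition Dn :: "nat \<Rightarrow> config \<times> config \<Rightarrow> ennreal" where
  "Dn n z = ennreal (real (card {u. u < n \<and> fst z u \<noteq> snd z u}))"

lemma bern_ennreal:
  assumes "0 \<le> p" "p \<le> 1" "\<And>b. 0 \<le> g b"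
  shows "(\<integral>\<^sup>+b. ennreal (g b) \<partial>bernoulli_pmf p) = ennreal (g True * p + g False * (1 - p))"
  using assms by (simp add: ennreal_mult'' ennreal_plus)

lemma field_bound:
  assumes "\<forall>v<n. G v < m" "\<forall>i<m. \<forall>j<m. 0 < k i j" "x \<in> config_space n" "v < n"
  shows "\<bar>local_field k n G x v\<bar> \<le> (\<Sum>i<m. \<Sum>j<m. k i j)"
proof -
  let ?K = "(\<Sum>i<m. \<Sum>j<m. k i j)"
  have nn: "\<And>i j. i < m \<Longrightarrow> j < m \<Longrightarrow> 0 \<le> k i j" using assms(2) by (simp add: less_imp_le)
  have kle: "k i j \<le> ?K" if "i < m" "j < m" for i j
  proof -
    have "k i j \<le> (\<Sum>j<m. k i j)"
      using that nn by (intro member_le_sum) auto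
    also have "\<dots> \<le> ?K"
      using that nn by (intro member_le_sum[where f="\<lambda>i. \<Sum>j<m. k i j"]) (auto intro!: sum_nonneg)
    finally show ?thesis .
  qed
  have "\<bar>local_field k n G x v\<bar> \<le> (\<Sum>w\<in>{0..<n} - {v}. \<bar>interaction k n G v w * real_of_int (x w)\<bar>)"
    unfolding local_field_def by (rule sum_abs)
  also have "\<dots> \<le> (\<Sum>w\<in>{0..<n}. ?K / real n)"
  proof -
    have "(\<Sum>w\<in>{0..<n} - {v}. \<bar>interaction k n G v w * real_of_int (x w)\<bar>) \<le> (\<Sum>w\<in>{0..<n} - {v}. ?K / real n)"
    proof (rule sum_mono)
      fix w assume w: "w \<in> {0..<n} - {v}"
      have xw: "\<bar>real_of_int (x w)\<bar> = 1" using cs_pm[OF assms(3), of w] w by auto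
      have "0 < k (G v) (G w)" using assms(1,2,4) w by auto
      moreover have "k (G v) (G w) \<le> ?K" using assms(1,4) w by (intro kle) auto
      ultimately show "\<bar>interaction k n G v w * real_of_int (x w)\<bar> \<le> ?K / real n"
        unfolding interaction_def abs_mult xw by (simp add: divide_right_mono)
    qed
    also have "\<dots> \<le> (\<Sum>w\<in>{0..<n}. ?K / real n)"
      using nn by (intro sum_mono2) (auto intro!: sum_nonneg divide_nonneg_nonneg)
    finally show ?thesis .
  qed
  also have "\<dots> = ?K" using assms(4) by simp
  finally show ?thesis .
qed

lemma aux_half1: "- t \<le> s \<Longrightarrow> (1 - t) / 2 \<le> (1 + s) / (2::real)" by (simp add: field_simps)
lemma aux_half2: "s \<le> t \<Longrightarrow> (1 - t) / 2 \<le> 1 - (1 + s) / (2::real)" by (simp add: field_simps)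

lemma p_bounds:
  assumes "\<forall>v<n. G v < m" "\<forall>i<m. \<forall>j<m. 0 < k i j" "x \<in> config_space n" "v < n" "\<beta> \<ge> 0"
  defines "\<delta> \<equiv> (1 - tanh (\<beta> * (\<Sum>i<m. \<Sum>j<m. k i j))) / 2"
  shows "\<delta> \<le> (1 + tanh (\<beta> * local_field k n G x v)) / 2"
    and "\<delta> \<le> 1 - (1 + tanh (\<beta> * local_field k n G x v)) / 2"
proof -
  let ?K = "(\<Sum>i<m. \<Sum>j<m. k i j)"
  let ?f = "local_field k n G x v"
  have b: "\<bar>?f\<bar> \<le> ?K" by (rule field_bound[OF assms(1-4)])
  have "\<beta> * ?f \<le> \<beta> * ?K" using b assms(5) by (intro mult_left_mono) auto
  then have u: "tanh (\<beta> * ?f) \<le> tanh (\<beta> * ?K)" by simp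
  have "\<beta> * (- ?f) \<le> \<beta> * ?K" using b assms(5) by (intro mult_left_mono) auto
  then have "- (\<beta> * ?K) \<le> \<beta> * ?f" by simp
  then have "tanh (- (\<beta> * ?K)) \<le> tanh (\<beta> * ?f)" by (simp only: tanh_real_le_iff)
  then have l: "- tanh (\<beta> * ?K) \<le> tanh (\<beta> * ?f)" by simp
  show "\<delta> \<le> (1 + tanh (\<beta> * ?f)) / 2" unfolding \<delta>_def by (rule aux_half1[OF l])
  show "\<delta> \<le> 1 - (1 + tanh (\<beta> * ?f)) / 2" unfolding \<delta>_def by (rule aux_half2[OF u])
qed



lemma dis_same:
  "x v = y v \<Longrightarrow> {u. u < n \<and> (x(v := s)) u \<noteq> (y(v := s)) u} = {u. u < n \<and> x u \<noteq> y u}"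
  by auto

lemma dis_drop:
  assumes "x v \<noteq> y v" "x w = y v" "y w = x v"
  shows "{u. u < n \<and> (x(v := y v)) u \<noteq> (y(w := y v)) u} = {u. u < n \<and> x u \<noteq> y u} - {v, w}"
proof (rule set_eqI)
  fix u
  have vw: "v \<noteq> w" using assms by metis
  show "u \<in> {u. u < n \<and> (x(v := y v)) u \<noteq> (y(w := y v)) u} \<longleftrightarrow> u \<in> {u. u < n \<and> x u \<noteq> y u} - {v, w}"
  proof (cases "u = v")
    case True then show ?thesis using vw by simp
  next
    case False
    show ?thesis
    proof (cases "u = w")
      case True then show ?thesis using assms(2) by simp
    next
      case False2: False
      then show ?thesis using False by simp
    qed
  qed
qed

lemma card_drop2:
  assumes "v \<in> A" "w \<in> A" "v \<noteq> w" "finite A"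
  shows "real (card (A - {v, w})) = real (card A) - 2"
proof -
  have "card (A - {v, w}) = card A - card {v, w}" using assms by (intro card_Diff_subset) auto
  moreover have "card {v, w} = 2" using assms by simp
  moreover have "2 \<le> card A" using assms by (metis \<open>card {v, w} = 2\<close> card_mono empty_subsetI insert_subset)
  ultimately show ?thesis by simp
qed

lemma per_v:
  assumes "good n G (x, y)" "pi_ok n G x y \<pi>" "v < n"
    and p: "\<delta> \<le> p" "\<delta> \<le> 1 - p" "0 \<le> \<delta>"
  shows "(\<integral>\<^sup>+b. Dn n (x(v := (if b then 1 else -1)), y(\<pi> v := (if b then 1 else -1))) \<partial>bernoulli_pmf p)
        \<le> ennreal (real (card {u. u < n \<and> x u \<noteq> y u}) - 2 * \<delta> * (if x v \<noteq> y v then 1 else 0))"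
proof -
  let ?A = "{u. u < n \<and> x u \<noteq> y u}"
  define g where "g b = real (card {u. u < n \<and> (x(v := (if b then 1 else -1))) u \<noteq> (y(\<pi> v := (if b then 1 else -1))) u})" for b
  have p01: "0 \<le> p" "p \<le> 1" using p by linarith+
  have "(\<integral>\<^sup>+b. Dn n (x(v := (if b then 1 else -1)), y(\<pi> v := (if b then 1 else -1))) \<partial>bernoulli_pmf p)
      = (\<integral>\<^sup>+b. ennreal (g b) \<partial>bernoulli_pmf p)" by (simp add: Dn_def g_def)
  also have "\<dots> = ennreal (g True * p + g False * (1 - p))"
    using p01 by (intro bern_ennreal) (auto simp: g_def)
  also have "\<dots> \<le> ennreal (real (card ?A) - 2 * \<delta> * (if x v \<noteq> y v then 1 else 0))"
  proof (rule ennreal_leI)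
    have xc: "x \<in> config_space n" and yc: "y \<in> config_space n" using assms(1) by (auto simp: good_def)
    have pv: "\<pi> v < n" "y (\<pi> v) = x v" "x v = y v \<longrightarrow> \<pi> v = v" "x v \<noteq> y v \<longrightarrow> x (\<pi> v) = y v"
      using assms(2,3) by (auto simp: pi_ok_def)
    show "g True * p + g False * (1 - p) \<le> real (card ?A) - 2 * \<delta> * (if x v \<noteq> y v then 1 else 0)"
    proof (cases "x v = y v")
      case True
      have pvv: "\<pi> v = v" using pv True by simp
      have "g b = real (card ?A)" for b unfolding g_def pvv dis_same[where x=x and y=y and v=v, OF True] ..
      then show ?thesis using True by (simp add: algebra_simps)
    next
      case False
      have w: "x (\<pi> v) = y v" "y (\<pi> v) = x v" "\<pi> v \<noteq> v" using pv False by auto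
      have fin: "finite ?A" by simp
      have inA: "v \<in> ?A" "\<pi> v \<in> ?A" using False w pv assms(3) by auto
      have keep: "{u. u < n \<and> (x(v := x v)) u \<noteq> (y(\<pi> v := x v)) u} = ?A"
      proof -
        have "y(\<pi> v := x v) = y" using w(2) by (metis fun_upd_triv)
        then show ?thesis by simp
      qed
      have drop: "real (card {u. u < n \<and> (x(v := y v)) u \<noteq> (y(\<pi> v := y v)) u}) = real (card ?A) - 2"
        unfolding dis_drop[OF False w(1,2)] by (rule card_drop2[OF inA w(3)[symmetric] fin])
      have "x v = 1 \<and> y v = -1 \<or> x v = -1 \<and> y v = 1"
        using cs_pm[OF xc assms(3)] cs_pm[OF yc assms(3)] False by auto
      then show ?thesis
      proof
        assume h: "x v = 1 \<and> y v = -1"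
        have gT: "g True = real (card ?A)" using keep h by (simp add: g_def)
        have gF: "g False = real (card ?A) - 2" using drop h by (simp add: g_def)
        have "g True * p + g False * (1 - p) = real (card ?A) - 2 * (1 - p)"
          unfolding gT gF by (simp add: algebra_simps)
        then show ?thesis using False p by simp
      next
        assume h: "x v = -1 \<and> y v = 1"
        have gF: "g False = real (card ?A)" using keep h by (simp add: g_def)
        have gT: "g True = real (card ?A) - 2" using drop h by (simp add: g_def)
        have "g True * p + g False * (1 - p) = real (card ?A) - 2 * p"
          unfolding gT gF by (simp add: algebra_simps)
        then show ?thesis using False p by simp
      qed
    qed
  qed
  finally show ?thesis .
qed



lemma cstep_contract:
  assumes g: "good n G z" and Gm: "\<forall>v<n. G v < m" and kp: "\<forall>i<m. \<forall>j<m. 0 < k i j" and b0: "\<beta> \<ge> 0"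
  defines "\<delta> \<equiv> (1 - tanh (\<beta> * (\<Sum>i<m. \<Sum>j<m. k i j))) / 2"
  shows "(\<integral>\<^sup>+z'. Dn n z' \<partial>cstep \<beta> k n G z) \<le> ennreal (1 - 2 * \<delta> / real n) * Dn n z"
proof -
  obtain x y where z: "z = (x, y)" by (cases z)
  define \<pi> where "\<pi> = (SOME \<pi>. pi_ok n G x y \<pi>)"
  have gxy: "good n G (x, y)" using g z by simp
  have pi: "pi_ok n G x y \<pi>" using pi_some gxy unfolding \<pi>_def by blast
  have n0: "0 < n" and xc: "x \<in> config_space n" using gxy by (auto simp: good_def)
  let ?K = "(\<Sum>i<m. \<Sum>j<m. k i j)"
  have K0: "0 \<le> ?K" using kp by (intro sum_nonneg) (auto simp: less_imp_le)
  have d0: "0 \<le> \<delta>" unfolding \<delta>_def using tanh_real_lt_1[of "\<beta> * ?K"] by simp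
  have d1: "2 * \<delta> \<le> 1" unfolding \<delta>_def using K0 b0 by simp
  let ?A = "{u. u < n \<and> x u \<noteq> y u}"
  let ?C = "real (card ?A)"
  define a where "a v = ?C - 2 * \<delta> * (if x v \<noteq> y v then 1 else 0)" for v
  have a0: "0 \<le> a v" if "v < n" for v
  proof (cases "x v \<noteq> y v")
    case True
    then have "v \<in> ?A" using that by simp
    then have "1 \<le> card ?A" by (metis One_nat_def Suc_leI card_gt_0_iff empty_iff finite_Collect_conjI finite_Collect_less_nat)
    then show ?thesis using True d1 by (simp add: a_def)
  qed (simp add: a_def)
  have "(\<integral>\<^sup>+z'. Dn n z' \<partial>cstep \<beta> k n G z) =
     (\<integral>\<^sup>+v. (\<integral>\<^sup>+b. Dn n (x(v := (if b then 1 else -1)), y(\<pi> v := (if b then 1 else -1))) \<partial>bernoulli_pmf ((1 + tanh (\<beta> * local_field k n G x v)) / 2)) \<partial>pmf_of_set {0..<n})"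
    using gxy by (simp add: cstep_def z \<pi>_def[symmetric])
  also have "\<dots> = (\<Sum>v\<in>{0..<n}. (\<integral>\<^sup>+b. Dn n (x(v := (if b then 1 else -1)), y(\<pi> v := (if b then 1 else -1))) \<partial>bernoulli_pmf ((1 + tanh (\<beta> * local_field k n G x v)) / 2))) / of_nat (card {0..<n})"
    using n0 by (intro nn_integral_pmf_of_set) auto
  also have "\<dots> \<le> (\<Sum>v\<in>{0..<n}. ennreal (a v)) / of_nat (card {0..<n})"
  proof (intro divide_right_mono_ennreal sum_mono)
    fix v assume v: "v \<in> {0..<n}"
    show "(\<integral>\<^sup>+b. Dn n (x(v := (if b then 1 else -1)), y(\<pi> v := (if b then 1 else -1))) \<partial>bernoulli_pmf ((1 + tanh (\<beta> * local_field k n G x v)) / 2)) \<le> ennreal (a v)"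
    proof -
      have vn: "v < n" using v by simp
      have pb1: "\<delta> \<le> (1 + tanh (\<beta> * local_field k n G x v)) / 2"
        unfolding \<delta>_def by (rule p_bounds(1)[OF Gm kp xc vn b0])
      have pb2: "\<delta> \<le> 1 - (1 + tanh (\<beta> * local_field k n G x v)) / 2"
        unfolding \<delta>_def by (rule p_bounds(2)[OF Gm kp xc vn b0])
      note pb = pb1 pb2
      show ?thesis unfolding a_def by (rule per_v[OF gxy pi vn pb d0])
    qed
  qed
  also have "\<dots> = ennreal ((\<Sum>v\<in>{0..<n}. a v) / real n)"
  proof -
    have e1: "(\<Sum>v\<in>{0..<n}. ennreal (a v)) = ennreal (\<Sum>v\<in>{0..<n}. a v)"
      using a0 by (intro sum_ennreal) auto
    have e2: "(of_nat (card {0..<n}) :: ennreal) = ennreal (real n)"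
      by (simp add: ennreal_of_nat_eq_real_of_nat)
    have s0: "0 \<le> (\<Sum>v\<in>{0..<n}. a v)" using a0 by (intro sum_nonneg) auto
    show ?thesis unfolding e1 e2 using s0 n0 by (intro divide_ennreal) auto
  qed
  also have "(\<Sum>v\<in>{0..<n}. a v) = real n * ?C - 2 * \<delta> * ?C"
  proof -
    have "(\<Sum>v\<in>{0..<n}. (if x v \<noteq> y v then 1 else 0 :: real)) = real (card {v \<in> {0..<n}. x v \<noteq> y v})"
      by (simp add: sum.inter_filter[symmetric])
    moreover have "{v \<in> {0..<n}. x v \<noteq> y v} = ?A" by auto
    ultimately show ?thesis by (simp add: a_def sum_subtractf sum_distrib_left[symmetric])
  qed
  also have "(real n * ?C - 2 * \<delta> * ?C) / real n = (1 - 2 * \<delta> / real n) * ?C"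
    using n0 by (simp add: field_simps)
  also have "ennreal ((1 - 2 * \<delta> / real n) * ?C) = ennreal (1 - 2 * \<delta> / real n) * Dn n z"
  proof -
    have "1 \<le> real n" using n0 by simp
    then have "2 * \<delta> / real n \<le> 1" using d1 by (simp add: divide_le_eq)
    then show ?thesis by (simp add: ennreal_mult Dn_def z)
  qed
  finally show ?thesis .
qed



lemma asym_bound:
  assumes d: "0 < \<delta>" "\<delta> \<le> 1/2" and n: "1 \<le> n"
  shows "(1 - 2 * \<delta> / real n) ^ horizon (1 / \<delta>) n * real n \<le> exp 1 / real n"
proof -
  let ?T = "horizon (1 / \<delta>) n"
  let ?a = "2 * \<delta> / real n"
  have a0: "0 \<le> ?a" and a1: "?a \<le> 1" using d n by (auto simp: field_simps)
  have ln0: "0 \<le> ln (real n)" using n by simp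
  have r0: "0 \<le> 1 / \<delta> * real n * ln (real n)" using d ln0 by simp
  have T: "real ?T \<ge> 1 / \<delta> * real n * ln (real n) - 1"
    unfolding horizon_def using r0 by linarith
  have "(1 - ?a) ^ ?T \<le> exp (- ?a) ^ ?T"
    using a1 exp_ge_add_one_self[of "- ?a"] by (intro power_mono) auto
  also have "\<dots> = exp (- ?a * real ?T)" by (simp add: exp_of_nat_mult[symmetric] mult.commute)
  also have "\<dots> \<le> exp (1 - 2 * ln (real n))"
  proof -
    have "?a * real ?T \<ge> ?a * (1 / \<delta> * real n * ln (real n) - 1)"
      using T a0 by (intro mult_left_mono) auto
    moreover have "?a * (1 / \<delta> * real n * ln (real n) - 1) = 2 * ln (real n) - ?a"
      using d n by (simp add: field_simps)
    ultimately show ?thesis using a1 by simp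
  qed
  also have "\<dots> = exp 1 / (real n)^2"
  proof -
    have l: "ln ((real n)^2) = 2 * ln (real n)" using n by (simp add: ln_realpow)
    have "exp (2 * ln (real n)) = (real n)^2"
      unfolding l[symmetric] using n by simp
    then show ?thesis by (simp add: exp_diff)
  qed
  finally have "(1 - ?a) ^ ?T * real n \<le> exp 1 / (real n)^2 * real n"
    using n by (intro mult_right_mono) auto
  also have "\<dots> = exp 1 / real n" using n by (simp add: power2_eq_square)
  finally show ?thesis .
qed



lemma Dn_le: "Dn n z \<le> ennreal (real n)"
proof -
  have "card {u. u < n \<and> fst z u \<noteq> snd z u} \<le> card {0..<n}" by (intro card_mono) auto
  then show ?thesis by (simp add: Dn_def)
qed

lemma prob_bound:
  assumes g: "good n G z0" and Gm: "\<forall>v<n. G v < m" and kp: "\<forall>i<m. \<forall>j<m. 0 < k i j" and b0: "\<beta> \<ge> 0"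
  defines "\<delta> \<equiv> (1 - tanh (\<beta> * (\<Sum>i<m. \<Sum>j<m. k i j))) / 2"
  shows "measure_pmf.prob (map_pmf (\<lambda>zs. (map fst zs, map snd zs)) (path_law (cstep \<beta> k n G) z0 T)) (not_coalesced T)
     \<le> (1 - 2 * \<delta> / real n) ^ T * real n"
proof -
  let ?Q = "cstep \<beta> k n G"
  let ?M = "path_law ?Q z0 T"
  let ?L = "map_pmf last ?M"
  let ?B = "{z :: config \<times> config. fst z \<noteq> snd z}"
  let ?r = "1 - 2 * \<delta> / real n"
  have n0: "0 < n" using g by (simp add: good_def)
  let ?K = "(\<Sum>i<m. \<Sum>j<m. k i j)"
  have K0: "0 \<le> ?K" using kp by (intro sum_nonneg) (auto simp: less_imp_le)
  have d0: "0 \<le> \<delta>" unfolding \<delta>_def using tanh_real_lt_1[of "\<beta> * ?K"] by simp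
  have d1: "2 * \<delta> \<le> 1" unfolding \<delta>_def using K0 b0 by simp
  have "1 \<le> real n" using n0 by simp
  then have "2 * \<delta> / real n \<le> 1" using d1 by (simp add: divide_le_eq)
  then have r0: "0 \<le> ?r" by simp
  have "measure_pmf.prob (map_pmf (\<lambda>zs. (map fst zs, map snd zs)) ?M) (not_coalesced T)
      = measure_pmf.prob ?M ((\<lambda>zs. (map fst zs, map snd zs)) -` not_coalesced T \<inter> set_pmf ?M)"
    by (simp add: measure_Int_set_pmf)
  also have "\<dots> \<le> measure_pmf.prob ?M (last -` ?B)"
  proof (rule measure_pmf.finite_measure_mono)
    show "(\<lambda>zs. (map fst zs, map snd zs)) -` not_coalesced T \<inter> set_pmf ?M \<subseteq> last -` ?B"
    proof
      fix zs assume zs: "zs \<in> (\<lambda>zs. (map fst zs, map snd zs)) -` not_coalesced T \<inter> set_pmf ?M"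
      then have len: "length zs = Suc T" by (intro path_law_len) blast
      from zs have "map fst zs ! T \<noteq> map snd zs ! T" by (auto simp: not_coalesced_def)
      then have "fst (zs ! T) \<noteq> snd (zs ! T)" using len by simp
      moreover have "last zs = zs ! T" using len by (metis diff_Suc_1 last_conv_nth list.size(3) nat.distinct(1))
      ultimately show "zs \<in> last -` ?B" by simp
    qed
  qed simp
  also have "\<dots> = measure_pmf.prob ?L ?B" by simp
  finally have P: "measure_pmf.prob (map_pmf (\<lambda>zs. (map fst zs, map snd zs)) ?M) (not_coalesced T) \<le> measure_pmf.prob ?L ?B" .
  have supp: "set_pmf ?L \<subseteq> {z. good n G z}"
    by (rule path_law_last_supp) (use g cstep_good in auto)
  have "ennreal (measure_pmf.prob ?L ?B) = emeasure ?L ?B" by (simp add: measure_pmf.emeasure_eq_measure)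
  also have "\<dots> = (\<integral>\<^sup>+z. indicator ?B z \<partial>?L)" by (rule nn_integral_indicator[symmetric]) simp
  also have "\<dots> \<le> (\<integral>\<^sup>+z. Dn n z \<partial>?L)"
  proof (rule nn_integral_mono_AE)
    show "AE z in measure_pmf ?L. indicator ?B z \<le> Dn n z"
    proof (rule AE_pmfI)
      fix z assume "z \<in> set_pmf ?L"
      then have gz: "good n G z" using supp by blast
      show "indicator ?B z \<le> Dn n z"
      proof (cases "z \<in> ?B")
        case True
        then obtain u where u: "fst z u \<noteq> snd z u" by auto
        have "u < n"
        proof (rule ccontr)
          assume "\<not> u < n"
          then show False using gz u by (auto simp: good_def config_space_def)
        qed
        then have "card {u. u < n \<and> fst z u \<noteq> snd z u} \<noteq> 0" using u by auto
        then have "1 \<le> card {u. u < n \<and> fst z u \<noteq> snd z u}" by linarith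
        then show ?thesis using True by (simp add: Dn_def)
      qed simp
    qed
  qed
  also have "\<dots> \<le> ennreal ?r ^ T * Dn n z0"
  proof (rule path_law_contract)
    show "\<And>z. z \<in> {z. good n G z} \<Longrightarrow> set_pmf (?Q z) \<subseteq> {z. good n G z}" using cstep_good by blast
    show "z0 \<in> {z. good n G z}" using g by simp
    show "\<And>z. z \<in> {z. good n G z} \<Longrightarrow> (\<integral>\<^sup>+y. Dn n y \<partial>?Q z) \<le> ennreal ?r * Dn n z"
      using cstep_contract[OF _ Gm kp b0] unfolding \<delta>_def by blast
  qed
  also have "\<dots> \<le> ennreal ?r ^ T * ennreal (real n)"
    by (intro mult_left_mono Dn_le) auto
  also have "\<dots> = ennreal (?r ^ T * real n)"
    using r0 by (simp add: ennreal_mult ennreal_power)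
  finally have "measure_pmf.prob ?L ?B \<le> ?r ^ T * real n"
    using r0 by (simp add: ennreal_le_iff)
  then show ?thesis using P by linarith
qed



lemma good_init:
  assumes "admissible m p n" "block_partition m p n G" "x \<in> config_space n" "y \<in> config_space n"
    "\<forall>i<m. block_magnetization n G x i = block_magnetization n G y i"
  shows "good n G (x, y)"
proof -
  have n0: "0 < n" using assms(1) by (simp add: admissible_def)
  have Gm: "\<forall>v<n. G v < m" using assms(2) by (simp add: block_partition_def)
  have "(\<Sum>u\<in>{u. u < n \<and> G u = i}. x u) = (\<Sum>u\<in>{u. u < n \<and> G u = i}. y u)" for i
  proof (cases "i < m")
    case True
    then have "(\<Sum>v\<in>{v. v < n \<and> G v = i}. real_of_int (x v)) / real n = (\<Sum>v\<in>{v. v < n \<and> G v = i}. real_of_int (y v)) / real n"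
      using assms(5) by (simp add: block_magnetization_def)
    then have "real_of_int (\<Sum>v\<in>{v. v < n \<and> G v = i}. x v) = real_of_int (\<Sum>v\<in>{v. v < n \<and> G v = i}. y v)"
      using n0 by simp
    then show ?thesis by (simp only: of_int_eq_iff)
  next
    case False
    then have e: "{u. u < n \<and> G u = i} = {}" using Gm by auto
    show ?thesis unfolding e by simp
  qed
  then show ?thesis using n0 assms(3,4) by (simp add: good_def)
qed

theorem lemma4p13:
  fixes m :: nat and p :: "nat \<Rightarrow> real" and k :: "nat \<Rightarrow> nat \<Rightarrow> real" and \<beta> :: real
  assumes "m \<ge> 1"
    and "\<forall>i<m. p i > 0"
    and "(\<Sum>i<m. p i) = 1"
    and "\<forall>i<m. \<forall>j<m. k i j = k j i"
    and "\<forall>i<m. \<forall>j<m. k i j > 0"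
    and "\<beta> \<ge> 0"
  shows "\<exists>c>0. \<forall>(G :: nat \<Rightarrow> nat \<Rightarrow> nat) (\<sigma> :: nat \<Rightarrow> config) (\<sigma>' :: nat \<Rightarrow> config).
    (\<forall>n. admissible m p n \<longrightarrow>
        block_partition m p n (G n) \<and> \<sigma> n \<in> config_space n \<and> \<sigma>' n \<in> config_space n \<and>
        (\<forall>i<m. block_magnetization n (G n) (\<sigma> n) i = block_magnetization n (G n) (\<sigma>' n) i))
    \<longrightarrow> (\<exists>\<mu> :: nat \<Rightarrow> (config list \<times> config list) pmf.
          (\<forall>n. admissible m p n \<longrightarrow>
             map_pmf fst (\<mu> n) = path_law (glauber_step \<beta> k n (G n)) (\<sigma> n) (horizon c n) \<and>
             map_pmf snd (\<mu> n) = path_law (glauber_step \<beta> k n (G n)) (\<sigma>' n) (horizon c n)) \<and>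
          (\<forall>\<epsilon>>0. eventually (\<lambda>n. admissible m p n \<longrightarrow>
             measure_pmf.prob (\<mu> n) (not_coalesced (horizon c n)) < \<epsilon>) sequentially))"
proof -
  let ?K = "(\<Sum>i<m. \<Sum>j<m. k i j)"
  define \<delta> where "\<delta> = (1 - tanh (\<beta> * ?K)) / 2"
  have K0: "0 \<le> ?K" using assms(5) by (intro sum_nonneg) (auto simp: less_imp_le)
  have d0: "0 < \<delta>" unfolding \<delta>_def using tanh_real_lt_1[of "\<beta> * ?K"] by simp
  have d1: "\<delta> \<le> 1/2" unfolding \<delta>_def using K0 assms(6) by simp
  show ?thesis
  proof (intro exI[of _ "1 / \<delta>"] conjI allI impI)
    show "0 < 1 / \<delta>" using d0 by simp
  next
    fix G :: "nat \<Rightarrow> nat \<Rightarrow> nat" and \<sigma> \<sigma>' :: "nat \<Rightarrow> config"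
    assume H: "\<forall>n. admissible m p n \<longrightarrow>
        block_partition m p n (G n) \<and> \<sigma> n \<in> config_space n \<and> \<sigma>' n \<in> config_space n \<and>
        (\<forall>i<m. block_magnetization n (G n) (\<sigma> n) i = block_magnetization n (G n) (\<sigma>' n) i)"
    define \<mu> where "\<mu> n = map_pmf (\<lambda>zs. (map fst zs, map snd zs))
        (path_law (cstep \<beta> k n (G n)) (\<sigma> n, \<sigma>' n) (horizon (1 / \<delta>) n))" for n
    show "\<exists>\<mu> :: nat \<Rightarrow> (config list \<times> config list) pmf.
          (\<forall>n. admissible m p n \<longrightarrow>
             map_pmf fst (\<mu> n) = path_law (glauber_step \<beta> k n (G n)) (\<sigma> n) (horizon (1 / \<delta>) n) \<and>
             map_pmf snd (\<mu> n) = path_law (glauber_step \<beta> k n (G n)) (\<sigma>' n) (horizon (1 / \<delta>) n)) \<and>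
          (\<forall>\<epsilon>>0. eventually (\<lambda>n. admissible m p n \<longrightarrow>
             measure_pmf.prob (\<mu> n) (not_coalesced (horizon (1 / \<delta>) n)) < \<epsilon>) sequentially)"
    proof (intro exI[of _ \<mu>] conjI allI impI)
      fix n
      show "map_pmf fst (\<mu> n) = path_law (glauber_step \<beta> k n (G n)) (\<sigma> n) (horizon (1 / \<delta>) n)"
        unfolding \<mu>_def pmf.map_comp o_def fst_conv
        using path_law_marg[of fst "cstep \<beta> k n (G n)" "glauber_step \<beta> k n (G n)" "(\<sigma> n, \<sigma>' n)"] cstep_fst
        by simp
      show "map_pmf snd (\<mu> n) = path_law (glauber_step \<beta> k n (G n)) (\<sigma>' n) (horizon (1 / \<delta>) n)"
        unfolding \<mu>_def pmf.map_comp o_def snd_conv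
        using path_law_marg[of snd "cstep \<beta> k n (G n)" "glauber_step \<beta> k n (G n)" "(\<sigma> n, \<sigma>' n)"] cstep_snd
        by simp
    next
      fix \<epsilon> :: real assume e: "0 < \<epsilon>"
      define N where "N = nat \<lceil>exp 1 / \<epsilon>\<rceil> + 1"
      show "eventually (\<lambda>n. admissible m p n \<longrightarrow>
             measure_pmf.prob (\<mu> n) (not_coalesced (horizon (1 / \<delta>) n)) < \<epsilon>) sequentially"
      proof (rule eventually_sequentiallyI[of N], intro impI)
        fix n assume nN: "N \<le> n" and adm: "admissible m p n"
        have n1: "1 \<le> n" using nN by (simp add: N_def)
        have Hn: "block_partition m p n (G n)" "\<sigma> n \<in> config_space n" "\<sigma>' n \<in> config_space n"
          "\<forall>i<m. block_magnetization n (G n) (\<sigma> n) i = block_magnetization n (G n) (\<sigma>' n) i"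
          using H adm by auto
        have g: "good n (G n) (\<sigma> n, \<sigma>' n)" by (rule good_init[OF adm Hn])
        have Gm: "\<forall>v<n. G n v < m" using Hn(1) by (simp add: block_partition_def)
        have "measure_pmf.prob (\<mu> n) (not_coalesced (horizon (1 / \<delta>) n))
            \<le> (1 - 2 * \<delta> / real n) ^ horizon (1 / \<delta>) n * real n"
          unfolding \<mu>_def \<delta>_def by (rule prob_bound[OF g Gm assms(5,6)])
        also have "\<dots> \<le> exp 1 / real n" by (rule asym_bound[OF d0 d1 n1])
        also have "\<dots> < \<epsilon>"
        proof -
          have "exp 1 / \<epsilon> < real N" unfolding N_def by linarith
          also have "\<dots> \<le> real n" using nN by simp
          finally have "exp 1 < \<epsilon> * real n" using e by (simp add: field_simps)
          then show ?thesis using n1 by (simp add: field_simps)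
        qed
        finally show "measure_pmf.prob (\<mu> n) (not_coalesced (horizon (1 / \<delta>) n)) < \<epsilon>" .
      qed
    qed
  qed
qed


end
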